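(* For all positive integers $m,n,w,d$ with $1\le w\le m-1$, $$A(m,n,w,d)\le A_{\mathrm S}\left(n(m-1),\,1-\frac{dm}{nw(m-w)}\right).$$
   Context: $J(m,w)$ denotes the set of binary vectors of length $m$ and Hamming weight $w$. Elements of $J(m,w)^n$ are identified with $m\times n$ binary matrices all of whose columns have weight $w$, with binary Hamming distance. $A(m,n,w,d)$ is the maximum cardinality of a nonempty subset of $J(m,w)^n$ with pairwise Hamming distances at least $2d$. For a positive integer $N$ and a real $s$, $A_{\mathrm S}(N,s)$ denotes the maximum cardinality of a spherical code of dimension $N$ and maximum cosine $s$, i.e. of a set of points on the unit sphere of $\mathbb{R}^N$ (Euclidean norm) such that the inner product of any two distinct points is at most $s$. *)

theory Defs
  imports Complex_Main "HOL-Library.Extended_Nat"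
begin

text \<open>Elements of J(m,w)^n as m x n binary matrices (functions nat => nat => bool,
  False outside the index range [0,m) x [0,n)) all of whose columns have weight w.\<close>
definition Jmat :: "nat \<Rightarrow> nat \<Rightarrow> nat \<Rightarrow> (nat \<Rightarrow> nat \<Rightarrow> bool) set" where
  "Jmat m n w = {M. (\<forall>i j. M i j \<longrightarrow> i < m \<and> j < n) \<and>
                    (\<forall>j<n. card {i. i < m \<and> M i j} = w)}"

definition hamming :: "nat \<Rightarrow> nat \<Rightarrow> (nat \<Rightarrow> nat \<Rightarrow> bool) \<Rightarrow> (nat \<Rightarrow> nat \<Rightarrow> bool) \<Rightarrow> nat" where
  "hamming m n M M' = card {(i, j). i < m \<and> j < n \<and> M i j \<noteq> M' i j}"

definition is_cw_code :: "nat \<Rightarrow> nat \<Rightarrow> nat \<Rightarrow> nat \<Rightarrow> (nat \<Rightarrow> nat \<Rightarrow> bool) set \<Rightarrow> bool" where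
  "is_cw_code m n w d C \<longleftrightarrow> C \<noteq> {} \<and> C \<subseteq> Jmat m n w \<and>
     (\<forall>M\<in>C. \<forall>M'\<in>C. M \<noteq> M' \<longrightarrow> hamming m n M M' \<ge> 2 * d)"

definition A_cw :: "nat \<Rightarrow> nat \<Rightarrow> nat \<Rightarrow> nat \<Rightarrow> enat" where
  "A_cw m n w d = Sup {enat k | k. \<exists>C. finite C \<and> card C = k \<and> is_cw_code m n w d C}"

text \<open>Points of R^N represented as functions nat => real vanishing outside [0,N).\<close>
definition is_spherical_code :: "nat \<Rightarrow> real \<Rightarrow> (nat \<Rightarrow> real) set \<Rightarrow> bool" where
  "is_spherical_code N s C \<longleftrightarrow>
     (\<forall>x\<in>C. (\<forall>i\<ge>N. x i = 0) \<and> (\<Sum>i<N. (x i)^2) = 1) \<and>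
     (\<forall>x\<in>C. \<forall>y\<in>C. x \<noteq> y \<longrightarrow> (\<Sum>i<N. x i * y i) \<le> s)"

definition A_S :: "nat \<Rightarrow> real \<Rightarrow> enat" where
  "A_S N s = Sup {enat k | k. \<exists>C. finite C \<and> card C = k \<and> is_spherical_code N s C}"

end

theory Submission
  imports Defs
begin

lemma card_col:
  fixes m :: nat
  shows "real (card {i. i < m \<and> P i}) = (\<Sum>i<m. (of_bool (P i) :: real))"
proof -
  have "{i. i < m \<and> P i} = {..<m} \<inter> {i. P i}" by auto
  moreover have "(\<Sum>i<m. (of_bool (P i) :: real)) = of_nat (card ({..<m} \<inter> {i. P i}))"
    by (rule sum_of_bool_eq) simp_all
  ultimately show ?thesis by simp
qed

lemma sum_bb:
  assumes "M \<in> Jmat m n w" "j < n"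
  shows "(\<Sum>i<m. (of_bool (M i j) :: real)) = real w"
  using assms card_col[of m "\<lambda>i. M i j"] unfolding Jmat_def by auto

lemma col_dist:
  fixes m :: nat shows
  "real (card {i. i < m \<and> M i j \<noteq> M' i j}) =
     (\<Sum>i<m. (of_bool (M i j)::real)) + (\<Sum>i<m. of_bool (M' i j))
      - 2 * (\<Sum>i<m. (of_bool (M i j)::real) * of_bool (M' i j))"
proof -
  have "real (card {i. i < m \<and> M i j \<noteq> M' i j}) = (\<Sum>i<m. of_bool (M i j \<noteq> M' i j))"
    by (rule card_col)
  also have "\<dots> = (\<Sum>i<m. (of_bool (M i j)::real) + of_bool (M' i j)
      - 2 * ((of_bool (M i j)::real) * of_bool (M' i j)))"
    by (rule sum.cong) auto
  finally show ?thesis by (simp only: sum.distrib sum_subtractf sum_distrib_left[symmetric])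
qed

lemma ham:
  "real (hamming m n M M') = (\<Sum>j<n. real (card {i. i < m \<and> M i j \<noteq> M' i j}))"
proof -
  have "prod.swap ` {(i, j). i < m \<and> j < n \<and> M i j \<noteq> M' i j}
        = Sigma {..<n} (\<lambda>j. {i. i < m \<and> M i j \<noteq> M' i j})" by auto
  moreover have "card (prod.swap ` {(i, j). i < m \<and> j < n \<and> M i j \<noteq> M' i j})
      = card {(i, j). i < m \<and> j < n \<and> M i j \<noteq> M' i j}"
    by (rule card_image) (simp add: inj_on_def)
  ultimately have "hamming m n M M' = card (Sigma {..<n} (\<lambda>j. {i. i < m \<and> M i j \<noteq> M' i j}))"
    unfolding hamming_def by simp
  also have "\<dots> = (\<Sum>j<n. card {i. i < m \<and> M i j \<noteq> M' i j})"
    by (rule card_SigmaI) auto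
  finally show ?thesis by simp
qed

lemma iso:
  fixes v v' :: "nat \<Rightarrow> real"
  assumes m2: "m \<ge> 2" and s1: "(\<Sum>i<m. v i) = 0" and s2: "(\<Sum>i<m. v' i) = 0"
  defines "\<alpha> \<equiv> (1 + sqrt (real m)) / (real m - 1)"
  shows "(\<Sum>i<m-1. (v i + \<alpha> * v (m-1)) * (v' i + \<alpha> * v' (m-1))) = (\<Sum>i<m. v i * v' i)"
proof -
  obtain q where mq: "m = Suc q" and q1: "q \<ge> 1" using m2 by (cases m) auto
  have a1: "v q = - (\<Sum>i<q. v i)" using s1 mq by simp
  have a2: "v' q = - (\<Sum>i<q. v' i)" using s2 mq by simp
  have sq: "sqrt (real m) * sqrt (real m) = real m" by simp
  have qa: "real q * \<alpha>^2 - 2 * \<alpha> = 1"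
  proof -
    have "real m - 1 = real q" using mq by simp
    hence al: "\<alpha> = (1 + sqrt (real m)) / real q" unfolding \<alpha>_def by simp
    have qp: "real q > 0" using q1 by simp
    have "real q * \<alpha>^2 - 2 * \<alpha> = ((1 + sqrt (real m))^2 - 2 * (1 + sqrt (real m))) / real q"
      using qp by (simp add: al power2_eq_square field_simps)
    also have "(1 + sqrt (real m))^2 - 2 * (1 + sqrt (real m)) = real m - 1"
      using sq by (simp add: power2_eq_square algebra_simps)
    also have "\<dots> = real q" using mq by simp
    finally show ?thesis using qp by simp
  qed
  have "(\<Sum>i<m-1. (v i + \<alpha> * v (m-1)) * (v' i + \<alpha> * v' (m-1)))
      = (\<Sum>i<q. v i * v' i) + \<alpha> * v' q * (\<Sum>i<q. v i) + \<alpha> * v q * (\<Sum>i<q. v' i)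
        + real q * \<alpha>^2 * v q * v' q"
    using mq by (simp add: algebra_simps sum.distrib sum_distrib_left sum_distrib_right power2_eq_square)
  also have "\<dots> = (\<Sum>i<q. v i * v' i) + v q * v' q * (real q * \<alpha>^2 - 2 * \<alpha>)"
    by (simp add: a1 a2 algebra_simps)
  also have "\<dots> = (\<Sum>i<m. v i * v' i)" using qa mq by simp
  finally show ?thesis .
qed

lemma flat:
  fixes n q :: nat and f :: "nat \<Rightarrow> nat \<Rightarrow> real"
  assumes "q > 0"
  shows "(\<Sum>k<n*q. f (k div q) (k mod q)) = (\<Sum>j<n. \<Sum>i<q. (f j i :: real))"
proof (induction n)
  case 0 then show ?case by simp
next
  case (Suc n)
  have "(\<Sum>k<Suc n*q. f (k div q) (k mod q)) = (\<Sum>k<n*q. f (k div q) (k mod q))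
        + (\<Sum>k\<in>{n*q..<n*q+q}. f (k div q) (k mod q))"
    by (simp add: add.commute sum.atLeastLessThan_concat[symmetric] lessThan_atLeast0
         flip: sum.atLeastLessThan_concat)
  also have "(\<Sum>k\<in>{n*q..<n*q+q}. f (k div q) (k mod q)) = (\<Sum>i<q. f n i)"
  proof -
    have "(\<Sum>k\<in>{n*q..<n*q+q}. f (k div q) (k mod q)) = (\<Sum>i\<in>{0..<q}. f ((i + n*q) div q) ((i + n*q) mod q))"
      by (simp add: sum.shift_bounds_nat_ivl[of _ 0 "n*q" q, simplified] add.commute)
    also have "\<dots> = (\<Sum>i<q. f n i)"
      using assms by (auto intro!: sum.cong simp: lessThan_atLeast0)
    finally show ?thesis .
  qed
  finally show ?case using Suc by simp
qed

lemma center_expand: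
  fixes x y :: "nat \<Rightarrow> real" and m :: nat
  shows "(\<Sum>i<m. (x i - c) * (y i - c)) =
     (\<Sum>i<m. x i * y i) - c * (\<Sum>i<m. x i) - c * (\<Sum>i<m. y i) + real m * c^2"
  by (simp add: algebra_simps sum.distrib sum_subtractf sum_distrib_left power2_eq_square)

lemma center_sum:
  fixes x :: "nat \<Rightarrow> real" and m :: nat
  shows "(\<Sum>i<m. (x i - c)) = (\<Sum>i<m. x i) - real m * c"
  by (simp add: sum_subtractf)

lemma col_inner:
  assumes MJ: "M \<in> Jmat m n w" and M'J: "M' \<in> Jmat m n w" and j: "j < n" and m0: "m > 0"
  shows "(\<Sum>i<m. ((of_bool (M i j)::real) - real w / real m) * (of_bool (M' i j) - real w / real m))
     = real w - real w ^ 2 / real m - real (card {i. i < m \<and> M i j \<noteq> M' i j}) / 2"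
proof -
  have s1: "(\<Sum>i<m. (of_bool (M i j)::real)) = real w" by (rule sum_bb[OF MJ j])
  have s2: "(\<Sum>i<m. (of_bool (M' i j)::real)) = real w" by (rule sum_bb[OF M'J j])
  have d: "real (card {i. i < m \<and> M i j \<noteq> M' i j}) = 2 * real w
      - 2 * (\<Sum>i<m. (of_bool (M i j)::real) * of_bool (M' i j))"
    using col_dist[of m M j M'] s1 s2 by simp
  show ?thesis
    unfolding center_expand[of "\<lambda>i. of_bool (M i j)" _ "\<lambda>i. of_bool (M' i j)"] s1 s2 d
    using m0 by (simp add: power2_eq_square field_simps)
qed

theorem proposition12:
  fixes m n w d :: nat
  assumes "m > 0" "n > 0" "w > 0" "d > 0" "1 \<le> w" "w \<le> m - 1"
  shows "A_cw m n w d \<le>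
    A_S (n * (m - 1)) (1 - real d * real m / (real n * real w * real (m - w)))"
proof -
  have m2: "m \<ge> 2" using assms by linarith
  have wm: "w < m" using assms by linarith
  define q where "q = m - 1"
  define N where "N = n * q"
  define \<alpha> where "\<alpha> = (1 + sqrt (real m)) / (real m - 1)"
  define X where "X = real n * real w * real (m - w)"
  define K where "K = X / real m"
  define s where "s = 1 - real d * real m / X"
  have q0: "q > 0" using m2 unfolding q_def by simp
  have Xp: "X > 0" using assms wm unfolding X_def by simp
  have Kp: "K > 0" using Xp assms unfolding K_def by simp
  have s1: "s < 1" using Xp assms unfolding s_def by simp
  define v where "v M j i = (of_bool (M i j)::real) - real w / real m" for M :: "nat \<Rightarrow> nat \<Rightarrow> bool" and j i
  define u where "u M j i = v M j i + \<alpha> * v M j (m-1)" for M j i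
  define P where "P M = (\<lambda>k. if k < N then u M (k div q) (k mod q) / sqrt K else 0)" for M
  have key: "(\<Sum>k<N. P M k * P M' k) = 1 - real (hamming m n M M') * real m / (2 * X)"
    if MJ: "M \<in> Jmat m n w" and M'J: "M' \<in> Jmat m n w" for M M'
  proof -
    have "(\<Sum>k<N. P M k * P M' k) = (\<Sum>k<N. u M (k div q) (k mod q) * u M' (k div q) (k mod q)) / K"
      unfolding P_def using Kp by (simp add: sum_divide_distrib)
    also have "(\<Sum>k<N. u M (k div q) (k mod q) * u M' (k div q) (k mod q))
        = (\<Sum>j<n. \<Sum>i<q. u M j i * u M' j i)"
      unfolding N_def by (rule flat[OF q0])
    also have "\<dots> = (\<Sum>j<n. \<Sum>i<m. v M j i * v M' j i)"
    proof (rule sum.cong[OF refl])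
      fix j assume "j \<in> {..<n}"
      hence j: "j < n" by simp
      have z1: "(\<Sum>i<m. v M j i) = 0" unfolding v_def center_sum sum_bb[OF MJ j]
        using assms by simp
      have z2: "(\<Sum>i<m. v M' j i) = 0" unfolding v_def center_sum sum_bb[OF M'J j]
        using assms by simp
      show "(\<Sum>i<q. u M j i * u M' j i) = (\<Sum>i<m. v M j i * v M' j i)"
        unfolding u_def q_def \<alpha>_def by (rule iso[OF m2 z1 z2])
    qed
    also have "\<dots> = (\<Sum>j<n. real w - real w ^ 2 / real m - real (card {i. i < m \<and> M i j \<noteq> M' i j}) / 2)"
      unfolding v_def using col_inner[OF MJ M'J _ assms(1)] by (intro sum.cong) auto
    also have "\<dots> = real n * (real w - real w ^ 2 / real m) - real (hamming m n M M') / 2"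
      unfolding ham by (simp add: sum_subtractf sum_divide_distrib)
    also have "real n * (real w - real w ^ 2 / real m) = K"
      using assms wm unfolding K_def X_def by (simp add: field_simps power2_eq_square of_nat_diff)
    finally have "(\<Sum>k<N. P M k * P M' k) = (K - real (hamming m n M M') / 2) / K" .
    also have "\<dots> = 1 - real (hamming m n M M') / (2 * K)" using Kp by (simp add: field_simps)
    also have "real (hamming m n M M') / (2 * K) = real (hamming m n M M') * real m / (2 * X)"
      using Xp assms unfolding K_def by (simp add: field_simps)
    finally show ?thesis .
  qed
  have h0: "hamming m n M M = 0" for M unfolding hamming_def by simp
  have norm1: "(\<Sum>k<N. P M k * P M k) = 1" if "M \<in> Jmat m n w" for M
    using key[OF that that] h0[of M] by simp
  have bnd: "1 - real H * real m / (2 * X) \<le> s" if "H \<ge> 2 * d" for H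
  proof -
    have "real d * real m / X \<le> real H * real m / (2 * X)"
    proof -
      have "real d * (real m * 2) \<le> real H * real m"
      proof -
        have "d * m * 2 \<le> H * m" using that by (metis mult.commute mult.left_commute mult_le_mono1)
        then have "real (d * m * 2) \<le> real (H * m)" by (rule of_nat_mono)
        then show ?thesis by simp
      qed
      then show ?thesis using Xp by (simp add: field_simps)
    qed
    then show ?thesis unfolding s_def by simp
  qed
  have main: "\<exists>C'. finite C' \<and> card C' = card C \<and> is_spherical_code N s C'"
    if fC: "finite C" and cC: "is_cw_code m n w d C" for C
  proof -
    have CJ: "C \<subseteq> Jmat m n w" and dist: "\<And>M M'. M \<in> C \<Longrightarrow> M' \<in> C \<Longrightarrow> M \<noteq> M' \<Longrightarrow> hamming m n M M' \<ge> 2 * d"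
      using cC unfolding is_cw_code_def by auto
    have inner: "(\<Sum>k<N. P M k * P M' k) \<le> s" if "M \<in> C" "M' \<in> C" "M \<noteq> M'" for M M'
    proof -
      have "M \<in> Jmat m n w" "M' \<in> Jmat m n w" using CJ that by auto
      then show ?thesis using key[of M M'] bnd[OF dist[OF that]] by simp
    qed
    have inj: "inj_on P C"
    proof (rule inj_onI, rule ccontr)
      fix M M' assume a: "M \<in> C" "M' \<in> C" "P M = P M'" "M \<noteq> M'"
      have "(\<Sum>k<N. P M k * P M' k) = 1" using norm1[of M] a CJ by auto
      with inner[OF a(1,2,4)] s1 show False by simp
    qed
    show ?thesis
    proof (intro exI conjI)
      show "finite (P ` C)" using fC by simp
      show "card (P ` C) = card C" using inj by (rule card_image)
      show "is_spherical_code N s (P ` C)"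
        unfolding is_spherical_code_def
      proof (intro conjI ballI allI impI)
        fix x i assume "x \<in> P ` C" "N \<le> i"
        then show "x i = 0" unfolding P_def by auto
      next
        fix x assume "x \<in> P ` C"
        then obtain M where "M \<in> C" "x = P M" by auto
        then show "(\<Sum>i<N. (x i)^2) = 1" using norm1[of M] CJ by (auto simp: power2_eq_square)
      next
        fix x y assume "x \<in> P ` C" "y \<in> P ` C" "x \<noteq> y"
        then obtain M M' where "M \<in> C" "M' \<in> C" "x = P M" "y = P M'" "M \<noteq> M'" by auto
        then show "(\<Sum>i<N. x i * y i) \<le> s" using inner by simp
      qed
    qed
  qed
  have eqN: "n * (m - 1) = N" unfolding N_def q_def by simp
  have eqs: "1 - real d * real m / (real n * real w * real (m - w)) = s" unfolding s_def X_def by simp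
  show ?thesis
    unfolding A_cw_def A_S_def eqN eqs
    by (rule Sup_subset_mono) (use main in blast)
qed

end
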